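(* Consider the two-user two-hop MAC with AF relays under individual power constraints as in the context, and let $\mathcal R_{opt}$ be its optimal AF rate region. (a) If the upper-layer noise dominates, i.e. $W(\mathbf B^{(2)})\ge W(\mathbf B^{(1i)})\ge1$ for $i=0,1,2$, then the region $\mathcal Q=\mathrm{cl}\,\mathrm{conv}\big(\mathcal R(\mathbf B^{(10)})\cup\mathcal R(\mathbf B^{(11)})\cup\mathcal R(\mathbf B^{(12)})\big)$ satisfies $\max_{\mathcal Q}R_1\ge\max_{\mathcal R_{opt}}R_1-\frac12$, $\max_{\mathcal Q}R_2\ge\max_{\mathcal R_{opt}}R_2-\frac12$ and $\max_{\mathcal Q}(R_1+R_2)\ge\max_{\mathcal R_{opt}}(R_1+R_2)-\frac12$. (b) If the lower-layer noise dominates, i.e. $1\ge W(\mathbf B^{(2)})\ge W(\mathbf B^{(1i)})$ for $i=0,1,2$, then the same three inequalities hold with $\mathcal Q=\mathcal R(\mathbf B^{(2)})$.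
   Context: Two sources $S_1,S_2$ with Gaussian inputs of powers $P_{S_1},P_{S_2}>0$, $n$ relays, one destination. Relay $k$ receives $y_k=h_{S_1,k}x_{S_1}+h_{S_2,k}x_{S_2}+z_k$ and sends $\beta_ky_k$; the destination receives $y_D=\mathbf h_1^T\mathbf B\mathbf h_{01}x_{S_1}+\mathbf h_1^T\mathbf B\mathbf h_{02}x_{S_2}+\mathbf h_1^T\mathbf B\mathbf z_1+z_D$, with $\mathbf h_{0i}=(h_{S_i,k})_k$, $\mathbf h_1=(h_{k,D})_k$ positive, $\mathbf B=\mathrm{diag}(\beta_k)$ real, noises i.i.d. $\mathcal N(0,1)$. $\mathbf B$ is feasible if $|\beta_k|\le\beta_k^{Up}:=\sqrt{P_k^{Up}/(1+h_{S_1,k}^2P_{S_1}+h_{S_2,k}^2P_{S_2})}$. Let $\mathcal C(x)=\frac12\log_2(1+x)$, $\mathbf A=P_{S_1}\mathbf h_{01}\mathbf h_{01}^T+P_{S_2}\mathbf h_{02}\mathbf h_{02}^T$, $W(\mathbf B)=\mathbf h_1^T\mathbf B^2\mathbf h_1$. $\mathcal R(\mathbf B)$ is the set of $(R_1,R_2)\ge0$ with $R_1\le\mathcal C\big((\mathbf h_1^T\mathbf B\mathbf h_{01})^2P_{S_1}/(W(\mathbf B)+1)\big)$, $R_2\le\mathcal C\big((\mathbf h_1^T\mathbf B\mathbf h_{02})^2P_{S_2}/(W(\mathbf B)+1)\big)$, $R_1+R_2\le\mathcal C\big(\mathbf h_1^T\mathbf B\mathbf A\mathbf B\mathbf h_1/(W(\mathbf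 B)+1)\big)$; $\mathcal R_{opt}$ is the closure of the convex hull of $\bigcup_{\mathbf B\text{ feasible}}\mathcal R(\mathbf B)$ (time sharing). Let $P_i=\|\mathbf h_{0i}\|^2P_{S_i}$; fix orthonormal $\mathbf u_1,\mathbf u_2$ and $0\le\alpha\le\beta\le\pi/2$ with $\mathbf h_{0i}/\|\mathbf h_{0i}\|$ equal to $\cos\alpha\,\mathbf u_1+\sin\alpha\,\mathbf u_2$ and $\cos\beta\,\mathbf u_1+\sin\beta\,\mathbf u_2$ respectively; let $\phi(\theta)=P_1\cos^2(\theta-\alpha)+P_2\cos^2(\theta-\beta)$ and $\theta_s$ a maximizer of $\phi$ on $[\alpha,\beta]$. For $\theta$, let $\mathbf x_\theta=\cos\theta\,\mathbf u_1+\sin\theta\,\mathbf u_2$ and $\mathbf B_\theta=\mathrm{diag}(c\,x_{\theta,k}/h_{k,D})$ with $c=\min_{k:x_{\theta,k}\ne0}\beta_k^{Up}h_{k,D}/|x_{\theta,k}|$ (feasible, at least one gain at its bound). Set $\mathbf B^{(10)}=\mathbf B_{\theta_s}$, $\mathbf B^{(11)}=\mathbf B_\alpha$, $\mathbf B^{(12)}=\mathbf B_\beta$, and $\mathbf B^{(2)}=\mathrm{diag}(\beta_1^{Up},\dots,\beta_n^{Up})$. *)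

theory Defs
  imports "HOL-Analysis.Analysis"
begin

text \<open>Relay network with relays indexed by a finite type 'n.
  Channel vectors h01, h02 (sources to relays), h1 (relays to destination).
  A diagonal AF matrix B = diag(beta_k) is represented by the vector b.\<close>

definition Ccap :: "real \<Rightarrow> real" where
  "Ccap x = 1/2 * log 2 (1 + x)"

definition betaUp :: "real \<Rightarrow> real \<Rightarrow> real^'n \<Rightarrow> real^'n \<Rightarrow> real^'n \<Rightarrow> 'n \<Rightarrow> real" where
  "betaUp PS1 PS2 h01 h02 PUp k =
     sqrt (PUp$k / (1 + (h01$k)^2 * PS1 + (h02$k)^2 * PS2))"

definition feasible :: "real \<Rightarrow> real \<Rightarrow> real^'n \<Rightarrow> real^'n \<Rightarrow> real^'n \<Rightarrow> real^'n \<Rightarrow> bool" where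
  "feasible PS1 PS2 h01 h02 PUp b \<longleftrightarrow> (\<forall>k. \<bar>b$k\<bar> \<le> betaUp PS1 PS2 h01 h02 PUp k)"

definition bil :: "real^'n \<Rightarrow> real^'n \<Rightarrow> real^'n \<Rightarrow> real" where
  "bil h b g = (\<Sum>k\<in>UNIV. h$k * b$k * g$k)"

definition Wn :: "real^'n \<Rightarrow> real^'n \<Rightarrow> real" where
  "Wn h1 b = (\<Sum>k\<in>UNIV. (h1$k)^2 * (b$k)^2)"

text \<open>h1^T B A B h1 with A = PS1 h01 h01^T + PS2 h02 h02^T\<close>
definition quadA :: "real \<Rightarrow> real \<Rightarrow> real^'n \<Rightarrow> real^'n \<Rightarrow> real^'n \<Rightarrow> real^'n \<Rightarrow> real" where
  "quadA PS1 PS2 h01 h02 h1 b =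
     (\<Sum>i\<in>UNIV. \<Sum>j\<in>UNIV. h1$i * b$i *
        (PS1 * h01$i * h01$j + PS2 * h02$i * h02$j) * b$j * h1$j)"

definition rateRegion :: "real \<Rightarrow> real \<Rightarrow> real^'n \<Rightarrow> real^'n \<Rightarrow> real^'n \<Rightarrow> real^'n \<Rightarrow> (real \<times> real) set" where
  "rateRegion PS1 PS2 h01 h02 h1 b =
     {(R1, R2). 0 \<le> R1 \<and> 0 \<le> R2 \<and>
        R1 \<le> Ccap ((bil h1 b h01)^2 * PS1 / (Wn h1 b + 1)) \<and>
        R2 \<le> Ccap ((bil h1 b h02)^2 * PS2 / (Wn h1 b + 1)) \<and>
        R1 + R2 \<le> Ccap (quadA PS1 PS2 h01 h02 h1 b / (Wn h1 b + 1))}"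

definition Ropt :: "real \<Rightarrow> real \<Rightarrow> real^'n \<Rightarrow> real^'n \<Rightarrow> real^'n \<Rightarrow> real^'n \<Rightarrow> (real \<times> real) set" where
  "Ropt PS1 PS2 h01 h02 h1 PUp =
     closure (convex hull
       (\<Union>b\<in>{b. feasible PS1 PS2 h01 h02 PUp b}. rateRegion PS1 PS2 h01 h02 h1 b))"

definition xth :: "real^'n \<Rightarrow> real^'n \<Rightarrow> real \<Rightarrow> real^'n" where
  "xth u1 u2 \<theta> = cos \<theta> *\<^sub>R u1 + sin \<theta> *\<^sub>R u2"

definition Bth :: "real \<Rightarrow> real \<Rightarrow> real^'n \<Rightarrow> real^'n \<Rightarrow> real^'n \<Rightarrow> real^'n
                   \<Rightarrow> real^'n \<Rightarrow> real^'n \<Rightarrow> real \<Rightarrow> real^'n" where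
  "Bth PS1 PS2 h01 h02 h1 PUp u1 u2 \<theta> =
     (let x = xth u1 u2 \<theta>;
          c = Min {betaUp PS1 PS2 h01 h02 PUp k * h1$k / \<bar>x$k\<bar> | k. x$k \<noteq> 0}
      in (\<chi> k. c * x$k / h1$k))"

definition B2 :: "real \<Rightarrow> real \<Rightarrow> real^'n \<Rightarrow> real^'n \<Rightarrow> real^'n \<Rightarrow> real^'n" where
  "B2 PS1 PS2 h01 h02 PUp = (\<chi> k. betaUp PS1 PS2 h01 h02 PUp k)"

end

theory Submission
  imports Defs
begin

lemma phi_expand:
  fixes P1 P2 \<alpha> \<beta> \<theta> :: real
  shows "P1 * (cos (\<theta> - \<alpha>))^2 + P2 * (cos (\<theta> - \<beta>))^2 =
    (P1+P2)/2 + ((P1 * cos (2*\<alpha>) + P2 * cos (2*\<beta>)) * cos (2*\<theta>)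
               + (P1 * sin (2*\<alpha>) + P2 * sin (2*\<beta>)) * sin (2*\<theta>))/2"
proof -
  have e: "(cos (\<theta> - x))^2 = (1 + cos (2*\<theta>) * cos (2*x) + sin (2*\<theta>) * sin(2*x))/2" for x
  proof -
    have "cos (2*(\<theta> - x)) = 2*(cos (\<theta> - x))^2 - 1" by (rule cos_double_cos)
    then have "(cos (\<theta> - x))^2 = (1 + cos (2*(\<theta> - x)))/2" by simp
    also have "2*(\<theta> - x) = 2*\<theta> - 2*x" by simp
    finally show ?thesis by (simp add: cos_diff)
  qed
  show ?thesis unfolding e[of \<alpha>] e[of \<beta>] by (simp add: field_simps)
qed

lemma quad_bound:
  fixes A B X Y :: real
  shows "A*X + B*Y \<le> sqrt (A^2+B^2) * sqrt (X^2+Y^2)"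
proof -
  have "(A*X+B*Y)^2 \<le> (A^2+B^2)*(X^2+Y^2)"
  proof -
    have "(A^2+B^2)*(X^2+Y^2) - (A*X+B*Y)^2 = (A*Y-B*X)^2" by (simp add: power2_eq_square algebra_simps)
    then show ?thesis by (smt (verit) zero_le_power2)
  qed
  then have "\<bar>A*X+B*Y\<bar> \<le> sqrt ((A^2+B^2)*(X^2+Y^2))"
    using real_le_rsqrt real_sqrt_abs by (metis real_sqrt_le_mono)
  then show ?thesis by (simp add: real_sqrt_mult)
qed

lemma ArC:
  fixes A B C S :: real
  assumes "C^2 + S^2 = 1" "S \<ge> 0" "B \<ge> 0" "C*B - S*A \<ge> 0" "C < 0 \<Longrightarrow> A \<le> 0"
  shows "A \<le> sqrt (A^2+B^2) * C"
proof (cases "C \<ge> 0")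
  case True
  show ?thesis
  proof (cases "A \<le> 0")
    case True
    have "0 \<le> sqrt (A^2+B^2) * C" using \<open>C\<ge>0\<close> by simp
    then show ?thesis using True by linarith
  next
    case False
    have "S*A \<ge> 0" using False assms by simp
    then have "(S*A)^2 \<le> (C*B)^2" using assms(4) power_mono[of "S*A" "C*B" 2] by simp
    then have "A^2*S^2 \<le> B^2*C^2" by (simp add: power_mult_distrib mult.commute)
    moreover have "A^2 = A^2*C^2 + A^2*S^2" using assms(1) by (metis distrib_left mult_1_right)
    ultimately have "A^2 \<le> (A^2+B^2)*C^2" by (simp add: algebra_simps)
    then have "sqrt (A^2) \<le> sqrt ((A^2+B^2)*C^2)" by (rule real_sqrt_le_mono)
    then show ?thesis using False True by (simp add: real_sqrt_mult)
  qed
next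
  case False
  then have An: "A \<le> 0" using assms(5) by simp
  have "S*A \<le> 0" using An assms by (simp add: mult_nonneg_nonpos)
  moreover have "C*B \<le> 0" using False assms by (simp add: mult_nonpos_nonneg)
  ultimately have "(-(C*B))^2 \<le> (-(S*A))^2" using assms(4) power_mono[of "-(C*B)" "-(S*A)" 2] by simp
  then have "(C*B)^2 \<le> (S*A)^2" by simp
  then have "B^2*C^2 \<le> A^2*S^2" by (simp add: power_mult_distrib mult.commute)
  moreover have "A^2 = A^2*C^2 + A^2*S^2" using assms(1) by (metis distrib_left mult_1_right)
  ultimately have "(A^2+B^2)*C^2 \<le> A^2" by (simp add: algebra_simps)
  then have "sqrt ((A^2+B^2)*C^2) \<le> sqrt (A^2)" by (rule real_sqrt_le_mono)
  then have "sqrt (A^2+B^2) * (-C) \<le> -A" using False An by (simp add: real_sqrt_mult)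
  then show ?thesis by simp
qed

lemma phi_global:
  fixes P1 P2 \<alpha> \<beta> \<theta>s a1 a2 :: real
  defines "\<phi> \<equiv> (\<lambda>\<theta>. P1 * (cos (\<theta> - \<alpha>))^2 + P2 * (cos (\<theta> - \<beta>))^2)"
  assumes P: "P1 \<ge> 0" "P2 \<ge> 0"
    and ab: "0 \<le> \<alpha>" "\<alpha> \<le> \<beta>" "\<beta> \<le> pi/2"
    and mx: "\<forall>\<theta>\<in>{\<alpha>..\<beta>}. \<phi> \<theta> \<le> \<phi> \<theta>s"
  shows "P1 * (cos \<alpha> * a1 + sin \<alpha> * a2)^2 + P2 * (cos \<beta> * a1 + sin \<beta> * a2)^2
          \<le> (a1^2 + a2^2) * \<phi> \<theta>s"
proof -
  define C where "C = cos (2*\<alpha>)"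
  define S where "S = sin (2*\<alpha>)"
  define C' where "C' = cos (2*\<beta>)"
  define S' where "S' = sin (2*\<beta>)"
  define A where "A = P1*C + P2*C'"
  define B where "B = P1*S + P2*S'"
  define r where "r = sqrt (A^2+B^2)"
  define M where "M = (P1+P2)/2 + r/2"
  have phi: "\<phi> \<theta> = (P1+P2)/2 + (A * cos (2*\<theta>) + B * sin (2*\<theta>))/2" for \<theta>
    unfolding \<phi>_def A_def B_def C_def C'_def S_def S'_def by (rule phi_expand)
  have SS: "S \<ge> 0" "S' \<ge> 0" unfolding S_def S'_def using ab by (auto intro!: sin_ge_zero)
  have CC: "C' \<le> C" unfolding C_def C'_def using ab by (intro cos_monotone_0_pi_le) auto
  have sig: "S'*C - C'*S \<ge> 0"
  proof -
    have "S'*C - C'*S = sin (2*\<beta> - 2*\<alpha>)" unfolding S_def S'_def C_def C'_def by (simp add: sin_diff)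
    also have "\<dots> \<ge> 0" using ab by (intro sin_ge_zero) auto
    finally show ?thesis .
  qed
  have B0: "B \<ge> 0" unfolding B_def using SS P by simp
  have p1: "C^2 + S^2 = 1" "C'^2 + S'^2 = 1" unfolding C_def S_def C'_def S'_def
    by (simp_all add: add.commute)
  have up: "A \<le> r * C"
    unfolding r_def
  proof (rule ArC[OF p1(1) SS(1) B0])
    have "C*B - S*A = P2 * (S'*C - C'*S)" unfolding A_def B_def by (simp add: algebra_simps)
    then show "C*B - S*A \<ge> 0" using sig P by simp
    assume "C < 0" then have "C' < 0" using CC by simp
    show "A \<le> 0" unfolding A_def using \<open>C<0\<close> \<open>C'<0\<close> P
      by (simp add: add_nonpos_nonpos mult_nonneg_nonpos)
  qed
  have lo: "r * C' \<le> A"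
  proof -
    have "-A \<le> sqrt ((-A)^2+B^2) * (-C')"
    proof (rule ArC[OF _ SS(2) B0])
      show "(-C')^2 + S'^2 = 1" using p1 by simp
      have "(-C')*B - S'*(-A) = P1 * (S'*C - C'*S)" unfolding A_def B_def by (simp add: algebra_simps)
      then show "(-C')*B - S'*(-A) \<ge> 0" using sig P by simp
      assume "-C' < 0" then have "C > 0" using CC by simp
      show "-A \<le> 0" unfolding A_def using \<open>C>0\<close> \<open>-C'<0\<close> P
        by (smt (verit) mult_nonneg_nonneg)
    qed
    then show ?thesis unfolding r_def by simp
  qed
  have ex: "\<exists>\<theta>0\<in>{\<alpha>..\<beta>}. M \<le> \<phi> \<theta>0"
  proof (cases "r = 0")
    case True
    then have "A = 0" "B = 0" unfolding r_def by (auto simp: sum_power2_eq_zero_iff)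
    then show ?thesis using ab True unfolding M_def phi by (intro bexI[of _ \<alpha>]) auto
  next
    case False
    have "r \<ge> 0" unfolding r_def by simp
    then have rp: "r > 0" using False by simp
    define c where "c = A / r"
    have c1: "c \<le> C" "C' \<le> c" using up lo rp unfolding c_def by (auto simp: field_simps)
    have Cb: "-1 \<le> C'" "C \<le> 1" unfolding C_def C'_def by auto
    define \<theta>0 where "\<theta>0 = arccos c / 2"
    have "arccos C \<le> arccos c" using c1 Cb by (intro arccos_le_arccos) auto
    moreover have "arccos C = 2*\<alpha>" unfolding C_def using ab by (intro arccos_cos) auto
    moreover have "arccos c \<le> arccos C'" using c1 Cb by (intro arccos_le_arccos) auto
    moreover have "arccos C' = 2*\<beta>" unfolding C'_def using ab by (intro arccos_cos) auto
    ultimately have th: "\<theta>0 \<in> {\<alpha>..\<beta>}" unfolding \<theta>0_def by auto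
    have cc: "cos (2*\<theta>0) = c" unfolding \<theta>0_def using c1 Cb by simp
    have "sin (2*\<theta>0) = sqrt (1 - c^2)" unfolding \<theta>0_def using c1 Cb by (simp add: sin_arccos)
    also have "1 - c^2 = (B/r)^2"
    proof -
      have r2: "r^2 = A^2+B^2" unfolding r_def by simp
      have "1 - (A/r)^2 = (r^2 - A^2)/r^2" using rp by (simp add: field_simps power_divide)
      also have "\<dots> = B^2/r^2" using r2 by simp
      also have "\<dots> = (B/r)^2" by (simp add: power_divide)
      finally show ?thesis unfolding c_def .
    qed
    also have "sqrt ((B/r)^2) = B/r" using B0 rp by simp
    finally have ss: "sin (2*\<theta>0) = B/r" .
    have "A * cos (2*\<theta>0) + B * sin (2*\<theta>0) = (A^2+B^2)/r" unfolding cc ss c_def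
      by (simp add: power2_eq_square add_divide_distrib)
    also have "\<dots> = r"
    proof -
      have r2: "r^2 = A^2+B^2" unfolding r_def by simp
      show ?thesis using rp unfolding r2[symmetric] by (simp add: power2_eq_square)
    qed
    finally show ?thesis using th unfolding M_def phi by auto
  qed
  then obtain \<theta>0 where "\<theta>0 \<in> {\<alpha>..\<beta>}" "M \<le> \<phi> \<theta>0" by blast
  then have Mle: "M \<le> \<phi> \<theta>s" using mx by force
  have "P1 * (cos \<alpha> * a1 + sin \<alpha> * a2)^2 + P2 * (cos \<beta> * a1 + sin \<beta> * a2)^2
     = (a1^2+a2^2)*(P1+P2)/2 + (A*(a1^2-a2^2) + B*(2*a1*a2))/2"
  proof -
    have e: "(cos x * a1 + sin x * a2)^2 = (a1^2+a2^2)/2 + (cos (2*x) * (a1^2-a2^2) + sin (2*x) * (2*a1*a2))/2" for x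
    proof -
      have i: "2*(x1*a1+y1*a2)^2 = (a1^2+a2^2)*(x1^2+y1^2) + (x1^2-y1^2)*(a1^2-a2^2) + (2*y1*x1)*(2*a1*a2)" for x1 y1 :: real
        by (simp add: power2_eq_square algebra_simps)
      have "(cos x)^2 + (sin x)^2 = 1" by simp
      then have "2*(cos x * a1 + sin x * a2)^2 = (a1^2+a2^2) + cos (2*x) * (a1^2-a2^2) + sin (2*x) * (2*a1*a2)"
        unfolding i cos_double sin_double by simp
      then show ?thesis by (simp add: field_simps)
    qed
    show ?thesis unfolding e A_def B_def C_def S_def C'_def S'_def by (simp add: field_simps)
  qed
  also have "A*(a1^2-a2^2) + B*(2*a1*a2) \<le> r * sqrt ((a1^2-a2^2)^2 + (2*a1*a2)^2)"
    unfolding r_def by (rule quad_bound)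
  also have "sqrt ((a1^2-a2^2)^2 + (2*a1*a2)^2) = a1^2+a2^2"
  proof -
    have "(a1^2-a2^2)^2 + (2*a1*a2)^2 = (a1^2+a2^2)^2" by (simp add: power2_eq_square algebra_simps)
    then show ?thesis by simp
  qed
  finally have "P1 * (cos \<alpha> * a1 + sin \<alpha> * a2)^2 + P2 * (cos \<beta> * a1 + sin \<beta> * a2)^2
     \<le> (a1^2+a2^2) * M" unfolding M_def by (simp add: field_simps)
  also have "\<dots> \<le> (a1^2+a2^2) * \<phi> \<theta>s" using Mle by (simp add: mult_left_mono)
  finally show ?thesis .
qed

lemma Ccap_mono: "0 \<le> x \<Longrightarrow> x \<le> y \<Longrightarrow> Ccap x \<le> Ccap y"
  unfolding Ccap_def by simp

lemma Ccap_nonneg: "0 \<le> x \<Longrightarrow> 0 \<le> Ccap x"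
  unfolding Ccap_def by simp

lemma Ccap_sub: "0 \<le> x \<Longrightarrow> 0 \<le> y \<Longrightarrow> Ccap (x+y) \<le> Ccap x + Ccap y"
proof -
  assume a: "0 \<le> x" "0 \<le> y"
  have "log 2 (1+(x+y)) \<le> log 2 ((1+x)*(1+y))" using a
    by (subst log_le_cancel_iff) (auto simp: algebra_simps intro: add_pos_nonneg)
  also have "\<dots> = log 2 (1+x) + log 2 (1+y)" using a by (simp add: log_mult_pos)
  finally show ?thesis unfolding Ccap_def by simp
qed

lemma Ccap_half: "0 \<le> x \<Longrightarrow> x/2 \<le> y \<Longrightarrow> Ccap x - 1/2 \<le> Ccap y"
proof -
  assume a: "0 \<le> x" "x/2 \<le> y"
  have y: "y \<ge> 0" using a by linarith
  have "log 2 (1+x) \<le> log 2 (2*(1+y))" using a y by (subst log_le_cancel_iff) auto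
  also have "\<dots> = log 2 2 + log 2 (1+y)" using y by (intro log_mult_pos) auto
  also have "\<dots> = 1 + log 2 (1+y)" by simp
  finally show ?thesis unfolding Ccap_def by simp
qed

lemma quadA_eq: "quadA PS1 PS2 h01 h02 h1 b = PS1 * (bil h1 b h01)^2 + PS2 * (bil h1 b h02)^2"
  unfolding quadA_def bil_def power2_eq_square
  by (simp add: sum_distrib_left sum_distrib_right sum.distrib algebra_simps)

definition vv :: "real^'n \<Rightarrow> real^'n \<Rightarrow> real^'n" where
  "vv h1 b = (\<chi> k. h1$k * b$k)"

lemma bil_vv: "bil h1 b g = vv h1 b \<bullet> g"
  unfolding bil_def vv_def inner_vec_def by simp

lemma Wn_vv: "Wn h1 b = vv h1 b \<bullet> vv h1 b"
  unfolding Wn_def vv_def inner_vec_def by (simp add: power2_eq_square algebra_simps)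

lemma Wn_nonneg: "Wn h1 b \<ge> 0"
  unfolding Wn_vv by simp

lemma region_points:
  fixes b h1 h01 h02 :: "real^'n"
  assumes P: "PS1 \<ge> 0" "PS2 \<ge> 0"
  defines "s1 \<equiv> (bil h1 b h01)^2 * PS1 / (Wn h1 b + 1)"
      and "s2 \<equiv> (bil h1 b h02)^2 * PS2 / (Wn h1 b + 1)"
  shows "(Ccap s1, 0) \<in> rateRegion PS1 PS2 h01 h02 h1 b"
        "(0, Ccap s2) \<in> rateRegion PS1 PS2 h01 h02 h1 b"
        "(Ccap s1, Ccap (s1+s2) - Ccap s1) \<in> rateRegion PS1 PS2 h01 h02 h1 b"
        "quadA PS1 PS2 h01 h02 h1 b / (Wn h1 b + 1) = s1 + s2"
        "s1 \<ge> 0" "s2 \<ge> 0"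
proof -
  have W: "Wn h1 b + 1 > 0" using Wn_nonneg[of h1 b] by linarith
  show q: "quadA PS1 PS2 h01 h02 h1 b / (Wn h1 b + 1) = s1 + s2"
    unfolding quadA_eq s1_def s2_def by (simp add: add_divide_distrib algebra_simps)
  show s: "s1 \<ge> 0" "s2 \<ge> 0" unfolding s1_def s2_def using W P by simp_all
  show "(Ccap s1, 0) \<in> rateRegion PS1 PS2 h01 h02 h1 b"
    unfolding rateRegion_def q using s
    by (auto simp: s1_def[symmetric] s2_def[symmetric] Ccap_nonneg intro: Ccap_mono)
  show "(0, Ccap s2) \<in> rateRegion PS1 PS2 h01 h02 h1 b"
    unfolding rateRegion_def q using s
    by (auto simp: s1_def[symmetric] s2_def[symmetric] Ccap_nonneg intro: Ccap_mono)
  show "(Ccap s1, Ccap (s1+s2) - Ccap s1) \<in> rateRegion PS1 PS2 h01 h02 h1 b"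
    unfolding rateRegion_def q using s Ccap_sub[OF s] Ccap_mono[of s1 "s1+s2"]
    by (auto simp: s1_def[symmetric] s2_def[symmetric] Ccap_nonneg)
qed

lemma region_bounded: "bounded (rateRegion PS1 PS2 h01 h02 h1 b)"
proof -
  have "rateRegion PS1 PS2 h01 h02 h1 b \<subseteq>
     {0..Ccap ((bil h1 b h01)^2 * PS1 / (Wn h1 b + 1))} \<times> {0..Ccap ((bil h1 b h02)^2 * PS2 / (Wn h1 b + 1))}"
    unfolding rateRegion_def by auto
  then show ?thesis by (rule bounded_subset[rotated]) (intro bounded_Times bounded_closed_interval)
qed

lemma hull_upper:
  fixes U :: "(real \<times> real) set" and w :: "real \<times> real"
  assumes "\<forall>r\<in>U. w \<bullet> r \<le> K"
  shows "\<forall>r\<in>closure (convex hull U). w \<bullet> r \<le> K"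
proof -
  have "closure (convex hull U) \<subseteq> {r. w \<bullet> r \<le> K}"
    by (intro closure_minimal hull_minimal) (use assms convex_halfspace_le closed_halfspace_le in auto)
  then show ?thesis by auto
qed

lemma sup_compare:
  fixes f :: "real \<times> real \<Rightarrow> real"
  assumes "bdd_above (f ` Q)" "p \<in> Q" "RO \<noteq> {}" "\<forall>r\<in>RO. f r \<le> K" "K - 1/2 \<le> f p"
  shows "Sup (f ` RO) - 1/2 \<le> Sup (f ` Q)"
proof -
  have "Sup (f ` RO) \<le> K" using assms(3,4) by (intro cSup_least) auto
  moreover have "f p \<le> Sup (f ` Q)" using assms(1,2) by (intro cSup_upper) auto
  ultimately show ?thesis using assms(5) by linarith
qed

lemma bdd_fns:
  fixes Q :: "(real \<times> real) set"
  assumes "bounded Q"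
  shows "bdd_above (fst ` Q)" "bdd_above (snd ` Q)" "bdd_above ((\<lambda>r. fst r + snd r) ` Q)"
proof -
  obtain B where B: "\<forall>x\<in>Q. norm x \<le> B" using assms bounded_iff by blast
  have f: "fst x \<le> B" "snd x \<le> B" if "x \<in> Q" for x
  proof -
    have "fst x \<le> norm (fst x)" by simp
    also have "\<dots> \<le> norm x" by (metis norm_fst_le prod.collapse)
    finally show "fst x \<le> B" using B that by auto
    have "snd x \<le> norm (snd x)" by simp
    also have "\<dots> \<le> norm x" by (metis norm_snd_le prod.collapse)
    finally show "snd x \<le> B" using B that by auto
  qed
  show "bdd_above (fst ` Q)" "bdd_above (snd ` Q)"
    unfolding bdd_above_def using f by (auto intro!: exI[of _ B])
  show "bdd_above ((\<lambda>r. fst r + snd r) ` Q)"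
    unfolding bdd_above_def using f by (auto intro!: exI[of _ "B+B"] add_mono)
qed

lemma bessel:
  fixes v u1 u2 :: "real^'n"
  assumes "u1 \<bullet> u1 = 1" "u2 \<bullet> u2 = 1" "u1 \<bullet> u2 = 0"
  shows "(v \<bullet> u1)^2 + (v \<bullet> u2)^2 \<le> v \<bullet> v"
proof -
  define a where "a = v \<bullet> u1"
  define b where "b = v \<bullet> u2"
  have "0 \<le> (v - a *\<^sub>R u1 - b *\<^sub>R u2) \<bullet> (v - a *\<^sub>R u1 - b *\<^sub>R u2)" by simp
  also have "\<dots> = v \<bullet> v - a^2 - b^2"
    using assms unfolding a_def b_def
    by (simp add: inner_diff_left inner_diff_right inner_commute power2_eq_square algebra_simps)
  finally show ?thesis unfolding a_def b_def by simp
qed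

lemma Bth_vv:
  assumes "\<forall>k. h1$k > 0"
  shows "\<exists>c. vv h1 (Bth PS1 PS2 h01 h02 h1 PUp u1 u2 \<theta>) = c *\<^sub>R xth u1 u2 \<theta>"
proof -
  define c where "c = Min {betaUp PS1 PS2 h01 h02 PUp k * h1$k / \<bar>xth u1 u2 \<theta>$k\<bar> | k. xth u1 u2 \<theta>$k \<noteq> 0}"
  have "vv h1 (Bth PS1 PS2 h01 h02 h1 PUp u1 u2 \<theta>) = c *\<^sub>R xth u1 u2 \<theta>"
    unfolding Bth_def Let_def vv_def c_def using assms by (auto simp: vec_eq_iff) (metis less_irrefl)
  then show ?thesis by blast
qed

lemma inner_dir:
  fixes v u1 u2 :: "real^'n"
  shows "v \<bullet> (cos a *\<^sub>R u1 + sin a *\<^sub>R u2) = cos a * (v \<bullet> u1) + sin a * (v \<bullet> u2)"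
  by (simp add: inner_add_right)

lemma xth_coords:
  fixes u1 u2 :: "real^'n"
  assumes "u1 \<bullet> u1 = 1" "u2 \<bullet> u2 = 1" "u1 \<bullet> u2 = 0"
  shows "xth u1 u2 \<theta> \<bullet> u1 = cos \<theta>" "xth u1 u2 \<theta> \<bullet> u2 = sin \<theta>"
        "xth u1 u2 \<theta> \<bullet> xth u1 u2 \<theta> = 1"
  using assms unfolding xth_def
  by (simp_all add: inner_add_left inner_add_right inner_commute power2_eq_square[symmetric])

lemma frac_le: "0 \<le> P \<Longrightarrow> 0 \<le> W \<Longrightarrow> X \<le> P*W \<Longrightarrow> X/(W+1) \<le> (P::real)"
  by (simp add: divide_le_eq algebra_simps)

lemma frac_ge: "0 \<le> Y \<Longrightarrow> 1 \<le> W \<Longrightarrow> Y/2 \<le> Y*W/(W+1::real)"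
  by (simp add: le_divide_eq algebra_simps) (metis mult_left_mono mult.commute mult_1_right)

lemma frac_ge2: "0 \<le> Y \<Longrightarrow> 0 \<le> W \<Longrightarrow> W \<le> 1 \<Longrightarrow> Y/2 \<le> Y/(W+1::real)"
  using mult_left_mono[of "W+1" 2 Y] by (simp add: divide_le_eq le_divide_eq)

lemma frac_le2: "0 \<le> Y \<Longrightarrow> 0 \<le> W \<Longrightarrow> Y/(W+1) \<le> (Y::real)"
  using mult_left_mono[of 1 "W+1" Y] by (simp add: divide_le_eq)

lemma gen_props:
  fixes b h1 h01 u1 u2 :: "real^'n"
  assumes u: "u1 \<bullet> u1 = 1" "u2 \<bullet> u2 = 1" "u1 \<bullet> u2 = 0"
    and h: "h01 = n1 *\<^sub>R (cos a *\<^sub>R u1 + sin a *\<^sub>R u2)"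
  shows "(bil h1 b h01)^2 * PS1 = n1^2 * PS1 * (cos a * (vv h1 b \<bullet> u1) + sin a * (vv h1 b \<bullet> u2))^2"
        "(vv h1 b \<bullet> u1)^2 + (vv h1 b \<bullet> u2)^2 \<le> Wn h1 b"
proof -
  have "bil h1 b h01 = n1 * (cos a * (vv h1 b \<bullet> u1) + sin a * (vv h1 b \<bullet> u2))"
    unfolding bil_vv h by (simp add: inner_add_right)
  then show "(bil h1 b h01)^2 * PS1 = n1^2 * PS1 * (cos a * (vv h1 b \<bullet> u1) + sin a * (vv h1 b \<bullet> u2))^2"
    by (simp add: power_mult_distrib)
  show "(vv h1 b \<bullet> u1)^2 + (vv h1 b \<bullet> u2)^2 \<le> Wn h1 b" unfolding Wn_vv by (rule bessel[OF u])
qed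

lemma arith_cd: "(n::real)^2*P*(cos a*(c * cos tt) + sin a*(c * sin tt))^2 = c^2*(n^2*P*(cos (tt-a))^2)"
proof -
  have "cos a*(c * cos tt) + sin a*(c * sin tt) = c * cos (tt-a)" by (simp add: cos_diff algebra_simps)
  then show ?thesis by (simp add: power_mult_distrib)
qed

lemma cs_bound: "(cos a * x + sin a * y)^2 \<le> x^2 + (y::real)^2"
proof -
  have "(cos a * x + sin a * y)^2 + (sin a * x - cos a * y)^2 = ((cos a)^2 + (sin a)^2) * (x^2 + y^2)"
    by algebra
  then have "(cos a * x + sin a * y)^2 + (sin a * x - cos a * y)^2 = x^2 + y^2" by simp
  moreover have "(sin a * x - cos a * y)^2 \<ge> 0" by simp
  ultimately show ?thesis by linarith
qed

lemma Bth_props: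
  fixes h1 h01 h02 u1 u2 PUp :: "real^'n" and PS1 PS2 \<theta> :: real
  assumes h1: "\<forall>k. h1$k > 0"
    and u: "u1 \<bullet> u1 = 1" "u2 \<bullet> u2 = 1" "u1 \<bullet> u2 = 0"
    and h01: "h01 = n1 *\<^sub>R (cos \<alpha> *\<^sub>R u1 + sin \<alpha> *\<^sub>R u2)"
    and h02: "h02 = n2 *\<^sub>R (cos \<beta> *\<^sub>R u1 + sin \<beta> *\<^sub>R u2)"
  defines "B \<equiv> Bth PS1 PS2 h01 h02 h1 PUp u1 u2 \<theta>"
  shows "(bil h1 B h01)^2 * PS1 = Wn h1 B * (n1^2 * PS1 * (cos (\<theta> - \<alpha>))^2)"
        "(bil h1 B h02)^2 * PS2 = Wn h1 B * (n2^2 * PS2 * (cos (\<theta> - \<beta>))^2)"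
proof -
  obtain c where c: "vv h1 B = c *\<^sub>R xth u1 u2 \<theta>" using Bth_vv[OF h1] unfolding B_def by blast
  have W: "Wn h1 B = c^2" unfolding Wn_vv c using xth_coords[OF u]
    by (simp add: power2_eq_square)
  have x: "vv h1 B \<bullet> u1 = c * cos \<theta>" "vv h1 B \<bullet> u2 = c * sin \<theta>" unfolding c using xth_coords[OF u] by simp_all
  show "(bil h1 B h01)^2 * PS1 = Wn h1 B * (n1^2 * PS1 * (cos (\<theta> - \<alpha>))^2)"
    unfolding gen_props(1)[OF u h01] x W
    by (rule arith_cd)
  show "(bil h1 B h02)^2 * PS2 = Wn h1 B * (n2^2 * PS2 * (cos (\<theta> - \<beta>))^2)"
    unfolding gen_props(1)[OF u h02] x W
    by (rule arith_cd)
qed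

lemma Ropt_upper:
  assumes "\<And>b r. feasible PS1 PS2 h01 h02 PUp b \<Longrightarrow> r \<in> rateRegion PS1 PS2 h01 h02 h1 b \<Longrightarrow> w \<bullet> r \<le> K"
  shows "\<forall>r\<in>Ropt PS1 PS2 h01 h02 h1 PUp. w \<bullet> r \<le> K"
  unfolding Ropt_def by (rule hull_upper) (use assms in auto)

lemma Ropt_ne:
  assumes "PS1 \<ge> 0" "PS2 \<ge> 0" "\<forall>k. PUp$k \<ge> 0"
  shows "Ropt PS1 PS2 h01 h02 h1 PUp \<noteq> {}"
proof -
  have "0 \<le> PUp$k / (1 + (h01$k)^2 * PS1 + (h02$k)^2 * PS2)" for k
    using assms by (intro divide_nonneg_nonneg add_nonneg_nonneg mult_nonneg_nonneg) auto
  then have f: "feasible PS1 PS2 h01 h02 PUp 0" unfolding feasible_def betaUp_def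
    by simp
  have "(0,0) \<in> rateRegion PS1 PS2 h01 h02 h1 0"
    unfolding rateRegion_def bil_def Wn_def quadA_def Ccap_def by simp
  then have "(0,0) \<in> (\<Union>b\<in>{b. feasible PS1 PS2 h01 h02 PUp b}. rateRegion PS1 PS2 h01 h02 h1 b)"
    using f by blast
  then have "(0,0) \<in> closure (convex hull (\<Union>b\<in>{b. feasible PS1 PS2 h01 h02 PUp b}. rateRegion PS1 PS2 h01 h02 h1 b))"
    by (meson closure_subset hull_subset subsetD)
  then show ?thesis unfolding Ropt_def by (metis empty_iff)
qed

lemma w_fst: "(1::real,0::real) \<bullet> r = fst r" by (cases r) simp
lemma w_snd: "(0::real,1::real) \<bullet> r = snd r" by (cases r) simp
lemma w_sum: "(1::real,1::real) \<bullet> r = fst r + snd r" by (cases r) simp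

lemma region_le:
  assumes "r \<in> rateRegion PS1 PS2 h01 h02 h1 b"
  shows "fst r \<le> Ccap ((bil h1 b h01)^2 * PS1 / (Wn h1 b + 1))"
        "snd r \<le> Ccap ((bil h1 b h02)^2 * PS2 / (Wn h1 b + 1))"
        "fst r + snd r \<le> Ccap (quadA PS1 PS2 h01 h02 h1 b / (Wn h1 b + 1))"
  using assms unfolding rateRegion_def by auto

lemma bil_feasible:
  assumes "feasible PS1 PS2 h01 h02 PUp b" "\<forall>k. h1$k > 0" "\<forall>k. g$k > 0"
  shows "(bil h1 b g)^2 \<le> (bil h1 (B2 PS1 PS2 h01 h02 PUp) g)^2"
proof -
  have "\<bar>bil h1 b g\<bar> \<le> (\<Sum>k\<in>UNIV. \<bar>h1$k * b$k * g$k\<bar>)" unfolding bil_def by (rule sum_abs)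
  also have "\<dots> \<le> bil h1 (B2 PS1 PS2 h01 h02 PUp) g"
    unfolding bil_def B2_def
  proof (rule sum_mono)
    fix k
    have "\<bar>b$k\<bar> \<le> betaUp PS1 PS2 h01 h02 PUp k" using assms(1) unfolding feasible_def by blast
    then show "\<bar>h1$k * b$k * g$k\<bar> \<le> h1$k * (\<chi> k. betaUp PS1 PS2 h01 h02 PUp k)$k * g$k"
      using assms(2,3) by (simp add: abs_mult mult_left_mono mult_right_mono less_imp_le)
  qed
  also have "\<dots> \<le> \<bar>bil h1 (B2 PS1 PS2 h01 h02 PUp) g\<bar>" by simp
  finally have "\<bar>bil h1 b g\<bar> \<le> \<bar>bil h1 (B2 PS1 PS2 h01 h02 PUp) g\<bar>" .
  then show ?thesis by (simp only: abs_le_square_iff)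
qed

theorem theorem6:
  fixes PS1 PS2 :: real
    and h01 h02 h1 PUp u1 u2 :: "real^'n"
    and \<alpha> \<beta> \<theta>s :: real
  defines P1_def: "P1 \<equiv> (norm h01)^2 * PS1"
      and P2_def: "P2 \<equiv> (norm h02)^2 * PS2"
  defines \<phi>_def: "\<phi> \<equiv> (\<lambda>\<theta>. P1 * (cos (\<theta> - \<alpha>))^2 + P2 * (cos (\<theta> - \<beta>))^2)"
  defines b10_def: "b10 \<equiv> Bth PS1 PS2 h01 h02 h1 PUp u1 u2 \<theta>s"
      and b11_def: "b11 \<equiv> Bth PS1 PS2 h01 h02 h1 PUp u1 u2 \<alpha>"
      and b12_def: "b12 \<equiv> Bth PS1 PS2 h01 h02 h1 PUp u1 u2 \<beta>"
      and b2_def: "b2 \<equiv> B2 PS1 PS2 h01 h02 PUp"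
  defines R_def: "R \<equiv> rateRegion PS1 PS2 h01 h02 h1"
      and RO_def: "RO \<equiv> Ropt PS1 PS2 h01 h02 h1 PUp"
  assumes PS_pos: "PS1 > 0" "PS2 > 0"
      and h_pos: "\<forall>k. h01$k > 0" "\<forall>k. h02$k > 0" "\<forall>k. h1$k > 0"
      and PUp_pos: "\<forall>k. PUp$k > 0"
      and u_on: "norm u1 = 1" "norm u2 = 1" "inner u1 u2 = 0"
      and ab: "0 \<le> \<alpha>" "\<alpha> \<le> \<beta>" "\<beta> \<le> pi/2"
      and h01_dir: "h01 /\<^sub>R norm h01 = cos \<alpha> *\<^sub>R u1 + sin \<alpha> *\<^sub>R u2"
      and h02_dir: "h02 /\<^sub>R norm h02 = cos \<beta> *\<^sub>R u1 + sin \<beta> *\<^sub>R u2"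
      and \<theta>s_max: "\<alpha> \<le> \<theta>s" "\<theta>s \<le> \<beta>" "\<forall>\<theta>\<in>{\<alpha>..\<beta>}. \<phi> \<theta> \<le> \<phi> \<theta>s"
  shows
    "(Wn h1 b2 \<ge> Wn h1 b10 \<and> Wn h1 b2 \<ge> Wn h1 b11 \<and> Wn h1 b2 \<ge> Wn h1 b12 \<and>
      Wn h1 b10 \<ge> 1 \<and> Wn h1 b11 \<ge> 1 \<and> Wn h1 b12 \<ge> 1 \<longrightarrow>
      (let Q = closure (convex hull (R b10 \<union> R b11 \<union> R b12)) in
         Sup (fst ` Q) \<ge> Sup (fst ` RO) - 1/2 \<and>
         Sup (snd ` Q) \<ge> Sup (snd ` RO) - 1/2 \<and>
         Sup ((\<lambda>r. fst r + snd r) ` Q) \<ge> Sup ((\<lambda>r. fst r + snd r) ` RO) - 1/2))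
   \<and>
    (1 \<ge> Wn h1 b2 \<and> Wn h1 b2 \<ge> Wn h1 b10 \<and> Wn h1 b2 \<ge> Wn h1 b11 \<and> Wn h1 b2 \<ge> Wn h1 b12 \<longrightarrow>
      (let Q = R b2 in
         Sup (fst ` Q) \<ge> Sup (fst ` RO) - 1/2 \<and>
         Sup (snd ` Q) \<ge> Sup (snd ` RO) - 1/2 \<and>
         Sup ((\<lambda>r. fst r + snd r) ` Q) \<ge> Sup ((\<lambda>r. fst r + snd r) ` RO) - 1/2))"
proof -
  have u: "u1 \<bullet> u1 = 1" "u2 \<bullet> u2 = 1" "u1 \<bullet> u2 = 0"
    using u_on by (simp_all add: norm_eq_1)
  have PS0: "PS1 \<ge> 0" "PS2 \<ge> 0" using PS_pos by simp_all
  have PUp0: "\<forall>k. PUp$k \<ge> 0" using PUp_pos by (simp add: less_imp_le)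
  have P0: "P1 \<ge> 0" "P2 \<ge> 0" unfolding P1_def P2_def using PS0 by simp_all
  have hn1: "norm h01 > 0"
  proof -
    have "h01$undefined > 0" using h_pos by simp
    then have "h01 \<noteq> 0" by auto
    then show ?thesis by simp
  qed
  have hn2: "norm h02 > 0"
  proof -
    have "h02$undefined > 0" using h_pos by simp
    then have "h02 \<noteq> 0" by auto
    then show ?thesis by simp
  qed
  have e1: "h01 = norm h01 *\<^sub>R (cos \<alpha> *\<^sub>R u1 + sin \<alpha> *\<^sub>R u2)"
  proof -
    have "h01 = norm h01 *\<^sub>R (h01 /\<^sub>R norm h01)" using hn1 by simp
    then show ?thesis using h01_dir by metis
  qed
  have e2: "h02 = norm h02 *\<^sub>R (cos \<beta> *\<^sub>R u1 + sin \<beta> *\<^sub>R u2)"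
  proof -
    have "h02 = norm h02 *\<^sub>R (h02 /\<^sub>R norm h02)" using hn2 by simp
    then show ?thesis using h02_dir by metis
  qed
  have g1: "(bil h1 b h01)^2 * PS1 = P1 * (cos \<alpha> * (vv h1 b \<bullet> u1) + sin \<alpha> * (vv h1 b \<bullet> u2))^2" for b
    unfolding gen_props(1)[OF u e1] P1_def ..
  have g2: "(bil h1 b h02)^2 * PS2 = P2 * (cos \<beta> * (vv h1 b \<bullet> u1) + sin \<beta> * (vv h1 b \<bullet> u2))^2" for b
    unfolding gen_props(1)[OF u e2] P2_def ..
  have gW: "(vv h1 b \<bullet> u1)^2 + (vv h1 b \<bullet> u2)^2 \<le> Wn h1 b" for b
    by (rule gen_props(2)[OF u e1])
  have W0: "Wn h1 b \<ge> 0" for b by (rule Wn_nonneg)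
  have phimax: "P1 * (cos \<alpha> * x + sin \<alpha> * y)^2 + P2 * (cos \<beta> * x + sin \<beta> * y)^2
          \<le> (x^2 + y^2) * \<phi> \<theta>s" for x y
    using phi_global[of P1 P2 \<alpha> \<beta> \<theta>s x y] P0 ab \<theta>s_max unfolding \<phi>_def by simp
  have phi0: "\<phi> \<theta>s \<ge> 0" unfolding \<phi>_def using P0 by simp
  have bth1: "(bil h1 (Bth PS1 PS2 h01 h02 h1 PUp u1 u2 \<theta>) h01)^2 * PS1
      = Wn h1 (Bth PS1 PS2 h01 h02 h1 PUp u1 u2 \<theta>) * (P1 * (cos (\<theta> - \<alpha>))^2)" for \<theta>
    unfolding P1_def by (rule Bth_props(1)[OF h_pos(3) u e1 e2])
  have bth2: "(bil h1 (Bth PS1 PS2 h01 h02 h1 PUp u1 u2 \<theta>) h02)^2 * PS2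
      = Wn h1 (Bth PS1 PS2 h01 h02 h1 PUp u1 u2 \<theta>) * (P2 * (cos (\<theta> - \<beta>))^2)" for \<theta>
    unfolding P2_def by (rule Bth_props(2)[OF h_pos(3) u e1 e2])
  have RO_ne: "RO \<noteq> {}" unfolding RO_def using Ropt_ne PS0 PUp0 by blast
  show ?thesis
  proof (intro conjI impI, goal_cases)
    case 1
    then have A: "Wn h1 b10 \<ge> 1" "Wn h1 b11 \<ge> 1" "Wn h1 b12 \<ge> 1" by auto
    define Q where "Q = closure (convex hull (R b10 \<union> R b11 \<union> R b12))"
    have bQ: "bounded Q" unfolding Q_def R_def
      by (intro bounded_closure bounded_convex_hull) (simp add: region_bounded)
    have "R b10 \<union> R b11 \<union> R b12 \<subseteq> Q" unfolding Q_def
      by (rule subset_trans[OF hull_subset closure_subset])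
    then have sub: "R b10 \<subseteq> Q" "R b11 \<subseteq> Q" "R b12 \<subseteq> Q" by auto
    have UB1: "\<forall>r\<in>RO. fst r \<le> Ccap P1"
    proof -
      have "\<forall>r\<in>RO. (1::real,0::real) \<bullet> r \<le> Ccap P1" unfolding RO_def
      proof (rule Ropt_upper)
        fix b r assume "r \<in> rateRegion PS1 PS2 h01 h02 h1 b"
        then have "fst r \<le> Ccap ((bil h1 b h01)^2*PS1/(Wn h1 b+1))" by (rule region_le)
        also have "\<dots> \<le> Ccap P1"
        proof (rule Ccap_mono)
          show "0 \<le> (bil h1 b h01)^2*PS1/(Wn h1 b+1)" using PS0 W0[of b] by simp
          show "(bil h1 b h01)^2*PS1/(Wn h1 b+1) \<le> P1"
          proof (rule frac_le[OF P0(1) W0])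
            have "(bil h1 b h01)^2*PS1 = P1 * (cos \<alpha> * (vv h1 b \<bullet> u1) + sin \<alpha> * (vv h1 b \<bullet> u2))^2" by (rule g1)
            also have "\<dots> \<le> P1 * Wn h1 b"
              using cs_bound[of \<alpha> "vv h1 b \<bullet> u1" "vv h1 b \<bullet> u2"] gW[of b] P0 by (meson mult_left_mono order_trans)
            finally show "(bil h1 b h01)^2*PS1 \<le> P1 * Wn h1 b" .
          qed
        qed
        finally show "(1::real,0::real) \<bullet> r \<le> Ccap P1" by (simp add: w_fst)
      qed
      then show ?thesis by (simp add: w_fst)
    qed
    have UB2: "\<forall>r\<in>RO. snd r \<le> Ccap P2"
    proof -
      have "\<forall>r\<in>RO. (0::real,1::real) \<bullet> r \<le> Ccap P2" unfolding RO_def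
      proof (rule Ropt_upper)
        fix b r assume "r \<in> rateRegion PS1 PS2 h01 h02 h1 b"
        then have "snd r \<le> Ccap ((bil h1 b h02)^2*PS2/(Wn h1 b+1))" by (rule region_le)
        also have "\<dots> \<le> Ccap P2"
        proof (rule Ccap_mono)
          show "0 \<le> (bil h1 b h02)^2*PS2/(Wn h1 b+1)" using PS0 W0[of b] by simp
          show "(bil h1 b h02)^2*PS2/(Wn h1 b+1) \<le> P2"
          proof (rule frac_le[OF P0(2) W0])
            have "(bil h1 b h02)^2*PS2 = P2 * (cos \<beta> * (vv h1 b \<bullet> u1) + sin \<beta> * (vv h1 b \<bullet> u2))^2" by (rule g2)
            also have "\<dots> \<le> P2 * Wn h1 b"
              using cs_bound[of \<beta> "vv h1 b \<bullet> u1" "vv h1 b \<bullet> u2"] gW[of b] P0 by (meson mult_left_mono order_trans)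
            finally show "(bil h1 b h02)^2*PS2 \<le> P2 * Wn h1 b" .
          qed
        qed
        finally show "(0::real,1::real) \<bullet> r \<le> Ccap P2" by (simp add: w_snd)
      qed
      then show ?thesis by (simp add: w_snd)
    qed
    have UB3: "\<forall>r\<in>RO. fst r + snd r \<le> Ccap (\<phi> \<theta>s)"
    proof -
      have "\<forall>r\<in>RO. (1::real,1::real) \<bullet> r \<le> Ccap (\<phi> \<theta>s)" unfolding RO_def
      proof (rule Ropt_upper)
        fix b r assume "r \<in> rateRegion PS1 PS2 h01 h02 h1 b"
        then have "fst r + snd r \<le> Ccap (quadA PS1 PS2 h01 h02 h1 b/(Wn h1 b+1))" by (rule region_le)
        also have "\<dots> \<le> Ccap (\<phi> \<theta>s)"
        proof (rule Ccap_mono)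
          show "0 \<le> quadA PS1 PS2 h01 h02 h1 b/(Wn h1 b+1)" using PS0 W0[of b] unfolding quadA_eq by simp
          show "quadA PS1 PS2 h01 h02 h1 b/(Wn h1 b+1) \<le> \<phi> \<theta>s"
          proof (rule frac_le[OF phi0 W0])
            have "quadA PS1 PS2 h01 h02 h1 b = P1 * (cos \<alpha> * (vv h1 b \<bullet> u1) + sin \<alpha> * (vv h1 b \<bullet> u2))^2
                 + P2 * (cos \<beta> * (vv h1 b \<bullet> u1) + sin \<beta> * (vv h1 b \<bullet> u2))^2"
              unfolding quadA_eq g1[symmetric] g2[symmetric] by (simp add: mult.commute)
            also have "\<dots> \<le> ((vv h1 b \<bullet> u1)^2 + (vv h1 b \<bullet> u2)^2) * \<phi> \<theta>s" by (rule phimax)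
            also have "\<dots> \<le> \<phi> \<theta>s * Wn h1 b" using mult_left_mono[OF gW[of b] phi0] by (simp add: mult.commute)
            finally show "quadA PS1 PS2 h01 h02 h1 b \<le> \<phi> \<theta>s * Wn h1 b" .
          qed
        qed
        finally show "(1::real,1::real) \<bullet> r \<le> Ccap (\<phi> \<theta>s)" by (simp add: w_sum)
      qed
      then show ?thesis by (simp add: w_sum)
    qed
    have r1: "Sup (fst ` RO) - 1/2 \<le> Sup (fst ` Q)"
    proof -
      define s1 where "s1 = (bil h1 b11 h01)^2 * PS1 / (Wn h1 b11 + 1)"
      have p0: "(Ccap s1, 0) \<in> R b11" unfolding s1_def R_def by (rule region_points(1)[OF PS0])
      have p: "(Ccap s1, 0) \<in> Q" using p0 sub(2) by (rule subsetD[rotated])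
      have "s1 = P1 * Wn h1 b11 / (Wn h1 b11 + 1)" unfolding s1_def b11_def bth1 by (simp add: mult.commute)
      then have "P1/2 \<le> s1" using frac_ge[OF P0(1) A(2)] by simp
      then have "Ccap P1 - 1/2 \<le> fst (Ccap s1, 0::real)" using Ccap_half[OF P0(1)] by simp
      then show ?thesis by (rule sup_compare[OF bdd_fns(1)[OF bQ] p RO_ne UB1])
    qed
    have r2: "Sup (snd ` RO) - 1/2 \<le> Sup (snd ` Q)"
    proof -
      define s2 where "s2 = (bil h1 b12 h02)^2 * PS2 / (Wn h1 b12 + 1)"
      have p0: "(0, Ccap s2) \<in> R b12" unfolding s2_def R_def by (rule region_points(2)[OF PS0])
      have p: "(0, Ccap s2) \<in> Q" using p0 sub(3) by (rule subsetD[rotated])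
      have "s2 = P2 * Wn h1 b12 / (Wn h1 b12 + 1)" unfolding s2_def b12_def bth2 by (simp add: mult.commute)
      then have "P2/2 \<le> s2" using frac_ge[OF P0(2) A(3)] by simp
      then have "Ccap P2 - 1/2 \<le> snd (0::real, Ccap s2)" using Ccap_half[OF P0(2)] by simp
      then show ?thesis by (rule sup_compare[OF bdd_fns(2)[OF bQ] p RO_ne UB2])
    qed
    have r3: "Sup ((\<lambda>r. fst r + snd r) ` RO) - 1/2 \<le> Sup ((\<lambda>r. fst r + snd r) ` Q)"
    proof -
      define s1 where "s1 = (bil h1 b10 h01)^2 * PS1 / (Wn h1 b10 + 1)"
      define s2 where "s2 = (bil h1 b10 h02)^2 * PS2 / (Wn h1 b10 + 1)"
      have p0: "(Ccap s1, Ccap (s1+s2) - Ccap s1) \<in> R b10" unfolding s1_def s2_def R_def by (rule region_points(3)[OF PS0])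
      have p: "(Ccap s1, Ccap (s1+s2) - Ccap s1) \<in> Q" using p0 sub(1) by (rule subsetD[rotated])
      have "s1 + s2 = \<phi> \<theta>s * Wn h1 b10 / (Wn h1 b10 + 1)" unfolding s1_def s2_def b10_def bth1 bth2 \<phi>_def
        by (simp add: add_divide_distrib algebra_simps)
      then have "\<phi> \<theta>s/2 \<le> s1 + s2" using frac_ge[OF phi0 A(1)] by simp
      then have "Ccap (\<phi> \<theta>s) - 1/2 \<le> (\<lambda>r. fst r + snd r) (Ccap s1, Ccap (s1+s2) - Ccap s1)"
        using Ccap_half[OF phi0] by simp
      then show ?thesis by (rule sup_compare[OF bdd_fns(3)[OF bQ] p RO_ne UB3])
    qed
    show ?case unfolding Let_def Q_def[symmetric] using r1 r2 r3 by simp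
  next
    case 2
    then have B: "Wn h1 b2 \<le> 1" by auto
    define T1 where "T1 = (bil h1 b2 h01)^2 * PS1"
    define T2 where "T2 = (bil h1 b2 h02)^2 * PS2"
    have T0: "T1 \<ge> 0" "T2 \<ge> 0" unfolding T1_def T2_def using PS0 by simp_all
    have bQ: "bounded (R b2)" unfolding R_def by (rule region_bounded)
    have F1: "(bil h1 b h01)^2 * PS1 \<le> T1" if "feasible PS1 PS2 h01 h02 PUp b" for b
      unfolding T1_def b2_def using bil_feasible[OF that h_pos(3) h_pos(1)] PS0 by (simp add: mult_right_mono)
    have F2: "(bil h1 b h02)^2 * PS2 \<le> T2" if "feasible PS1 PS2 h01 h02 PUp b" for b
      unfolding T2_def b2_def using bil_feasible[OF that h_pos(3) h_pos(2)] PS0 by (simp add: mult_right_mono)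
    have UB1: "\<forall>r\<in>RO. fst r \<le> Ccap T1"
    proof -
      have "\<forall>r\<in>RO. (1::real,0::real) \<bullet> r \<le> Ccap T1" unfolding RO_def
      proof (rule Ropt_upper)
        fix b r assume fb: "feasible PS1 PS2 h01 h02 PUp b" and "r \<in> rateRegion PS1 PS2 h01 h02 h1 b"
        then have "fst r \<le> Ccap ((bil h1 b h01)^2*PS1/(Wn h1 b+1))" by (intro region_le)
        also have "\<dots> \<le> Ccap T1"
        proof (rule Ccap_mono)
          show "0 \<le> (bil h1 b h01)^2*PS1/(Wn h1 b+1)" using PS0 W0[of b] by simp
          have "(bil h1 b h01)^2*PS1/(Wn h1 b+1) \<le> (bil h1 b h01)^2*PS1"
            using PS0 W0[of b] by (intro frac_le2) auto
          then show "(bil h1 b h01)^2*PS1/(Wn h1 b+1) \<le> T1" using F1[OF fb] by linarith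
        qed
        finally show "(1::real,0::real) \<bullet> r \<le> Ccap T1" by (simp add: w_fst)
      qed
      then show ?thesis by (simp add: w_fst)
    qed
    have UB2: "\<forall>r\<in>RO. snd r \<le> Ccap T2"
    proof -
      have "\<forall>r\<in>RO. (0::real,1::real) \<bullet> r \<le> Ccap T2" unfolding RO_def
      proof (rule Ropt_upper)
        fix b r assume fb: "feasible PS1 PS2 h01 h02 PUp b" and "r \<in> rateRegion PS1 PS2 h01 h02 h1 b"
        then have "snd r \<le> Ccap ((bil h1 b h02)^2*PS2/(Wn h1 b+1))" by (intro region_le)
        also have "\<dots> \<le> Ccap T2"
        proof (rule Ccap_mono)
          show "0 \<le> (bil h1 b h02)^2*PS2/(Wn h1 b+1)" using PS0 W0[of b] by simp
          have "(bil h1 b h02)^2*PS2/(Wn h1 b+1) \<le> (bil h1 b h02)^2*PS2"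
            using PS0 W0[of b] by (intro frac_le2) auto
          then show "(bil h1 b h02)^2*PS2/(Wn h1 b+1) \<le> T2" using F2[OF fb] by linarith
        qed
        finally show "(0::real,1::real) \<bullet> r \<le> Ccap T2" by (simp add: w_snd)
      qed
      then show ?thesis by (simp add: w_snd)
    qed
    have UB3: "\<forall>r\<in>RO. fst r + snd r \<le> Ccap (T1 + T2)"
    proof -
      have "\<forall>r\<in>RO. (1::real,1::real) \<bullet> r \<le> Ccap (T1 + T2)" unfolding RO_def
      proof (rule Ropt_upper)
        fix b r assume fb: "feasible PS1 PS2 h01 h02 PUp b" and "r \<in> rateRegion PS1 PS2 h01 h02 h1 b"
        then have "fst r + snd r \<le> Ccap (quadA PS1 PS2 h01 h02 h1 b/(Wn h1 b+1))" by (intro region_le)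
        also have "\<dots> \<le> Ccap (T1 + T2)"
        proof (rule Ccap_mono)
          show "0 \<le> quadA PS1 PS2 h01 h02 h1 b/(Wn h1 b+1)" using PS0 W0[of b] unfolding quadA_eq by simp
          have "quadA PS1 PS2 h01 h02 h1 b/(Wn h1 b+1) \<le> quadA PS1 PS2 h01 h02 h1 b"
            using PS0 W0[of b] unfolding quadA_eq by (intro frac_le2) auto
          moreover have "quadA PS1 PS2 h01 h02 h1 b \<le> T1 + T2"
            unfolding quadA_eq using F1[OF fb] F2[OF fb] by (simp add: mult.commute)
          ultimately show "quadA PS1 PS2 h01 h02 h1 b/(Wn h1 b+1) \<le> T1 + T2" by linarith
        qed
        finally show "(1::real,1::real) \<bullet> r \<le> Ccap (T1 + T2)" by (simp add: w_sum)
      qed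
      then show ?thesis by (simp add: w_sum)
    qed
    define s1 where "s1 = (bil h1 b2 h01)^2 * PS1 / (Wn h1 b2 + 1)"
    define s2 where "s2 = (bil h1 b2 h02)^2 * PS2 / (Wn h1 b2 + 1)"
    have s1: "T1/2 \<le> s1" unfolding s1_def T1_def[symmetric] using frac_ge2[OF T0(1) W0 B] .
    have s2: "T2/2 \<le> s2" unfolding s2_def T2_def[symmetric] using frac_ge2[OF T0(2) W0 B] .
    have r1: "Sup (fst ` RO) - 1/2 \<le> Sup (fst ` R b2)"
    proof -
      have p0: "(Ccap s1, 0) \<in> R b2" unfolding s1_def R_def by (rule region_points(1)[OF PS0])
      have p: "(Ccap s1, 0) \<in> R b2" by (rule p0)
      have "Ccap T1 - 1/2 \<le> fst (Ccap s1, 0::real)" using Ccap_half[OF T0(1) s1] by simp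
      then show ?thesis by (rule sup_compare[OF bdd_fns(1)[OF bQ] p RO_ne UB1])
    qed
    have r2: "Sup (snd ` RO) - 1/2 \<le> Sup (snd ` R b2)"
    proof -
      have p0: "(0, Ccap s2) \<in> R b2" unfolding s2_def R_def by (rule region_points(2)[OF PS0])
      have p: "(0, Ccap s2) \<in> R b2" by (rule p0)
      have "Ccap T2 - 1/2 \<le> snd (0::real, Ccap s2)" using Ccap_half[OF T0(2) s2] by simp
      then show ?thesis by (rule sup_compare[OF bdd_fns(2)[OF bQ] p RO_ne UB2])
    qed
    have r3: "Sup ((\<lambda>r. fst r + snd r) ` RO) - 1/2 \<le> Sup ((\<lambda>r. fst r + snd r) ` R b2)"
    proof -
      have p0: "(Ccap s1, Ccap (s1+s2) - Ccap s1) \<in> R b2" unfolding s1_def s2_def R_def by (rule region_points(3)[OF PS0])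
      have p: "(Ccap s1, Ccap (s1+s2) - Ccap s1) \<in> R b2" by (rule p0)
      have "(T1+T2)/2 \<le> s1 + s2" using s1 s2 by simp
      then have "Ccap (T1+T2) - 1/2 \<le> (\<lambda>r. fst r + snd r) (Ccap s1, Ccap (s1+s2) - Ccap s1)"
        using Ccap_half[of "T1+T2" "s1+s2"] T0 by simp
      then show ?thesis by (rule sup_compare[OF bdd_fns(3)[OF bQ] p RO_ne UB3])
    qed
    show ?case unfolding Let_def using r1 r2 r3 by simp
  qed
qed

end
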